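(* Let $S$ be a left fairly amenable semigroup with left fairly invariant finitely-additive probability measure $\mu$, let $s\in S$, and let $f:S\to[0,\infty)$ be bounded. If $s\ast f$ is bounded (with all defining sums convergent), then $\int (s\ast f)\,d\mu=\int f\,d\mu$.
   Context: For a semigroup $S$, $s\in S$, $A\subseteq S$: $sA=\{sa:a\in A\}$; $s$ acts injectively on the left of $A$ if $a\mapsto sa$ is injective on $A$. A finitely-additive probability measure on $S$ is $\mu:\mathcal P(S)\to[0,1]$, $\mu(S)=1$, additive on disjoint sets; it is left fairly invariant if $\mu(sA)=\mu(A)$ whenever $s$ acts injectively on the left of $A$. $S$ is left fairly amenable if such $\mu$ exists. For bounded $f$, $(s\ast f)(x)=\sum_{t\in S,\ st=x}f(t)$. For a finitely-additive measure, the integral of a non-negative simple function $\sum_i a_i\chi_{A_i}$ (finite sum) is $\sum_i a_i\mu(A_i)$, and for a bounded non-negative $f$, $\int f\,d\mu$ is the supremum of integrals of simple functions $h\le f$. *)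

theory Defs
  imports "HOL-Analysis.Analysis"
begin

definition fa_prob_measure :: "('a set \<Rightarrow> real) \<Rightarrow> bool" where
  "fa_prob_measure \<mu> \<longleftrightarrow>
     (\<forall>A. 0 \<le> \<mu> A \<and> \<mu> A \<le> 1) \<and> \<mu> UNIV = 1 \<and>
     (\<forall>A B. A \<inter> B = {} \<longrightarrow> \<mu> (A \<union> B) = \<mu> A + \<mu> B)"

definition left_fairly_invariant :: "('a::semigroup_mult set \<Rightarrow> real) \<Rightarrow> bool" where
  "left_fairly_invariant \<mu> \<longleftrightarrow>
     (\<forall>s A. inj_on (\<lambda>a. s * a) A \<longrightarrow> \<mu> ((\<lambda>a. s * a) ` A) = \<mu> A)"

definition left_fairly_amenable :: "'a::semigroup_mult itself \<Rightarrow> bool" where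
  "left_fairly_amenable _ \<longleftrightarrow>
     (\<exists>\<mu> :: 'a set \<Rightarrow> real. fa_prob_measure \<mu> \<and> left_fairly_invariant \<mu>)"

definition lconv :: "'a::semigroup_mult \<Rightarrow> ('a \<Rightarrow> real) \<Rightarrow> 'a \<Rightarrow> real" where
  "lconv s f x = infsum f {t. s * t = x}"

definition fa_integral :: "('a set \<Rightarrow> real) \<Rightarrow> ('a \<Rightarrow> real) \<Rightarrow> real" where
  "fa_integral \<mu> f = Sup {(\<Sum>i<n. a i * \<mu> (A i)) | (n::nat) (a::nat \<Rightarrow> real) (A::nat \<Rightarrow> 'a set).
      (\<forall>i<n. 0 \<le> a i) \<and> (\<forall>x. (\<Sum>i<n. a i * indicator (A i) x) \<le> f x)}"

end

theory Submission
  imports Defs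
begin


context
  fixes \<mu> :: "'a set \<Rightarrow> real"
  assumes fa: "fa_prob_measure \<mu>"
begin

lemma fa_add: "A \<inter> B = {} \<Longrightarrow> \<mu> (A \<union> B) = \<mu> A + \<mu> B"
  using fa unfolding fa_prob_measure_def by blast

lemma fa_nonneg: "0 \<le> \<mu> A" and fa_le1: "\<mu> A \<le> 1" and fa_univ: "\<mu> UNIV = 1"
  using fa unfolding fa_prob_measure_def by blast+

lemma fa_empty: "\<mu> {} = 0"
  using fa_add[of "{}" "{}"] by simp

lemma fa_split: "\<mu> A = \<mu> (A \<inter> D) + \<mu> (A - D)"
proof -
  have "(A \<inter> D) \<union> (A - D) = A" by blast
  then have "\<mu> A = \<mu> ((A \<inter> D) \<union> (A - D))" by simp
  also have "\<dots> = \<mu> (A \<inter> D) + \<mu> (A - D)" by (rule fa_add) blast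
  finally show ?thesis .
qed

lemma fa_mono: "A \<subseteq> B \<Longrightarrow> \<mu> A \<le> \<mu> B"
proof -
  assume "A \<subseteq> B"
  then have "B \<inter> A = A" by blast
  then show ?thesis using fa_split[of B A] fa_nonneg[of "B - A"] by simp
qed

lemma fa_union_finite:
  "finite K \<Longrightarrow> disjoint_family_on P K \<Longrightarrow> \<mu> (\<Union>k\<in>K. P k) = (\<Sum>k\<in>K. \<mu> (P k))"
proof (induction K rule: finite_induct)
  case empty then show ?case by (simp add: fa_empty)
next
  case (insert j K)
  have d: "disjoint_family_on P K" and "P j \<inter> (\<Union>k\<in>K. P k) = {}"
    using insert.prems unfolding disjoint_family_on_insert[OF insert.hyps(2)] by blast+
  then show ?case using insert.IH[OF d] insert.hyps by (simp add: fa_add)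
qed

lemma fa_pos:
  fixes a :: "'i \<Rightarrow> real"
  assumes "finite I"
  shows "(\<forall>x\<in>D. 0 \<le> c + (\<Sum>i\<in>I. a i * indicator (A i) x)) \<Longrightarrow>
    0 \<le> c * \<mu> D + (\<Sum>i\<in>I. a i * \<mu> (A i \<inter> D))"
  using assms
proof (induction I arbitrary: c D rule: finite_induct)
  case empty
  show ?case
  proof (cases "D = {}")
    case True then show ?thesis by (simp add: fa_empty)
  next
    case False
    then obtain x where "x \<in> D" by blast
    with empty have "0 \<le> c" by auto
    then show ?thesis by (simp add: fa_nonneg)
  qed
next
  case (insert j I)
  define D1 where "D1 = D \<inter> A j"
  define D2 where "D2 = D - A j"
  have h1: "0 \<le> (c + a j) * \<mu> D1 + (\<Sum>i\<in>I. a i * \<mu> (A i \<inter> D1))"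
  proof (rule insert.IH, intro ballI)
    fix x assume "x \<in> D1"
    then have "x \<in> D" "x \<in> A j" by (auto simp: D1_def)
    have s: "(\<Sum>i\<in>insert j I. a i * indicator (A i) x) = a j * indicator (A j) x + (\<Sum>i\<in>I. a i * indicator (A i) x)"
      by (rule sum.insert[OF insert.hyps(1,2)])
    have "a j * indicator (A j) x = a j" using \<open>x \<in> A j\<close> by simp
    have "0 \<le> c + (\<Sum>i\<in>insert j I. a i * indicator (A i) x)" using insert.prems \<open>x \<in> D\<close> by blast
    then show "0 \<le> c + a j + (\<Sum>i\<in>I. a i * indicator (A i) x)" using s \<open>a j * indicator (A j) x = _\<close> by linarith
  qed
  have h2: "0 \<le> c * \<mu> D2 + (\<Sum>i\<in>I. a i * \<mu> (A i \<inter> D2))"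
  proof (rule insert.IH, intro ballI)
    fix x assume "x \<in> D2"
    then have "x \<in> D" "x \<notin> A j" by (auto simp: D2_def)
    have s: "(\<Sum>i\<in>insert j I. a i * indicator (A i) x) = a j * indicator (A j) x + (\<Sum>i\<in>I. a i * indicator (A i) x)"
      by (rule sum.insert[OF insert.hyps(1,2)])
    have "a j * indicator (A j) x = 0" using \<open>x \<notin> A j\<close> by simp
    have "0 \<le> c + (\<Sum>i\<in>insert j I. a i * indicator (A i) x)" using insert.prems \<open>x \<in> D\<close> by blast
    then show "0 \<le> c + (\<Sum>i\<in>I. a i * indicator (A i) x)" using s \<open>a j * indicator (A j) x = _\<close> by linarith
  qed
  have eD: "\<mu> D = \<mu> D1 + \<mu> D2" unfolding D1_def D2_def by (rule fa_split)
  have eA: "\<mu> (A i \<inter> D) = \<mu> (A i \<inter> D1) + \<mu> (A i \<inter> D2)" for i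
  proof -
    have "\<mu> (A i \<inter> D) = \<mu> (A i \<inter> D \<inter> A j) + \<mu> (A i \<inter> D - A j)" by (rule fa_split)
    moreover have "A i \<inter> D \<inter> A j = A i \<inter> D1" "A i \<inter> D - A j = A i \<inter> D2"
      by (auto simp: D1_def D2_def)
    ultimately show ?thesis by simp
  qed
  have ej: "A j \<inter> D = D1" by (auto simp: D1_def)
  have "c * \<mu> D + (\<Sum>i\<in>insert j I. a i * \<mu> (A i \<inter> D))
      = c * \<mu> D + a j * \<mu> (A j \<inter> D) + (\<Sum>i\<in>I. a i * \<mu> (A i \<inter> D))"
    using insert.hyps by (simp add: add.assoc)
  also have "\<dots> = c * \<mu> D + a j * \<mu> D1 + (\<Sum>i\<in>I. a i * \<mu> (A i \<inter> D1) + a i * \<mu> (A i \<inter> D2))"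
    by (simp only: ej eA distrib_left)
  also have "\<dots> = ((c + a j) * \<mu> D1 + (\<Sum>i\<in>I. a i * \<mu> (A i \<inter> D1)))
      + (c * \<mu> D2 + (\<Sum>i\<in>I. a i * \<mu> (A i \<inter> D2)))"
    by (simp add: sum.distrib eD algebra_simps)
  finally show ?case using h1 h2 by linarith
qed

lemma fa_mono_simple:
  fixes a :: "'i \<Rightarrow> real" and b :: "'j \<Rightarrow> real"
  assumes "finite I" "finite J"
    and le: "\<And>x. (\<Sum>i\<in>I. a i * indicator (A i) x) \<le> c + (\<Sum>j\<in>J. b j * indicator (B j) x)"
  shows "(\<Sum>i\<in>I. a i * \<mu> (A i)) \<le> c + (\<Sum>j\<in>J. b j * \<mu> (B j))"
proof -
  define a' where "a' = case_sum (\<lambda>i. - a i) b"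
  define A' where "A' = case_sum A B"
  have fin: "finite (I <+> J)" using assms by simp
  have "0 \<le> c * \<mu> UNIV + (\<Sum>k\<in>I <+> J. a' k * \<mu> (A' k \<inter> UNIV))"
  proof (rule fa_pos[OF fin], intro ballI)
    fix x :: 'a
    show "0 \<le> c + (\<Sum>k\<in>I <+> J. a' k * indicator (A' k) x)"
    proof -
      have "(\<Sum>k\<in>I <+> J. a' k * indicator (A' k) x) = - (\<Sum>i\<in>I. a i * indicator (A i) x) + (\<Sum>j\<in>J. b j * indicator (B j) x)"
        by (simp only: sum.Plus[OF assms(1,2)] o_def a'_def A'_def sum.case mult_minus_left sum_negf)
      then show ?thesis using le[of x] by linarith
    qed
  qed
  moreover have "(\<Sum>k\<in>I <+> J. a' k * \<mu> (A' k \<inter> UNIV)) = - (\<Sum>i\<in>I. a i * \<mu> (A i)) + (\<Sum>j\<in>J. b j * \<mu> (B j))"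
    by (simp only: sum.Plus[OF assms(1,2)] o_def a'_def A'_def sum.case mult_minus_left sum_negf Int_UNIV_right)
  ultimately show ?thesis by (simp add: fa_univ)
qed

end


definition pc :: "'a::semigroup_mult \<Rightarrow> ('a \<Rightarrow> 'a set) \<Rightarrow> ('a \<Rightarrow> 'a \<Rightarrow> nat) \<Rightarrow> 'a set \<Rightarrow> nat \<Rightarrow> 'a set" where
  "pc s E e W k = {t. s * t \<in> W \<and> t \<in> E (s * t) \<and> e (s * t) t = k}"

lemma pc_inj:
  assumes "\<And>x. inj_on (e x) (E x)"
  shows "inj_on ((*) s) (pc s E e W k)"
proof (rule inj_onI)
  fix t u assume t: "t \<in> pc s E e W k" and u: "u \<in> pc s E e W k" and eq: "s * t = s * u"
  from t u eq have "t \<in> E (s*t)" "u \<in> E (s*t)" "e (s*t) t = e (s*t) u"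
    by (auto simp: pc_def)
  then show "t = u" using assms[of "s*t"] by (meson inj_onD)
qed

lemma pc_fiber:
  assumes "\<And>x. E x \<subseteq> {t. s * t = x}"
  shows "{t \<in> pc s E e W k. s * t = x} = (if x \<in> W then {t \<in> E x. e x t = k} else {})"
  using assms by (auto simp: pc_def)

lemma pc_disj: "k \<noteq> k' \<Longrightarrow> pc s E e W k \<inter> pc s E e W k' = {}"
  by (auto simp: pc_def)

lemma pc_disj_family: "disjoint_family_on (pc s E e W) K"
  unfolding disjoint_family_on_def using pc_disj by blast

lemma pc_image:
  assumes "\<And>x. E x \<subseteq> {t. s * t = x}" and "\<And>x. bij_betw (e x) (E x) {..<card (E x)}"
  shows "(*) s ` pc s E e W k = {x \<in> W. k < card (E x)}"
proof
  show "(*) s ` pc s E e W k \<subseteq> {x \<in> W. k < card (E x)}"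
  proof
    fix x assume "x \<in> (*) s ` pc s E e W k"
    then obtain t where t: "t \<in> pc s E e W k" "x = s * t" by blast
    then have "t \<in> E x" "e x t = k" "x \<in> W" by (auto simp: pc_def)
    then show "x \<in> {x \<in> W. k < card (E x)}"
      using assms(2)[of x] by (auto simp: bij_betw_def)
  qed
next
  show "{x \<in> W. k < card (E x)} \<subseteq> (*) s ` pc s E e W k"
  proof
    fix x assume x: "x \<in> {x \<in> W. k < card (E x)}"
    then have "k \<in> e x ` E x" using assms(2)[of x] by (auto simp: bij_betw_def)
    then obtain t where t: "t \<in> E x" "e x t = k" by blast
    then have "s * t = x" using assms(1)[of x] by blast
    with t x show "x \<in> (*) s ` pc s E e W k" unfolding pc_def by force
  qed
qed

lemma ind_inj_piece:
  fixes s :: "'a::semigroup_mult"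
  assumes "inj_on ((*) s) P"
  shows "(indicator ((*) s ` (A \<inter> P)) x :: real) = (\<Sum>t\<in>{t\<in>P. s*t=x}. indicator A t)"
proof (cases "\<exists>t\<in>P. s*t = x")
  case True
  then obtain t0 where t0: "t0 \<in> P" "s*t0 = x" by blast
  have fib: "{t\<in>P. s*t=x} = {t0}" using t0 assms by (auto dest: inj_onD)
  have "x \<in> (*) s ` (A \<inter> P) \<longleftrightarrow> t0 \<in> A"
    using t0 assms by (auto dest: inj_onD)
  then show ?thesis by (simp add: fib indicator_def)
next
  case False
  then have e: "{t\<in>P. s*t=x} = {}" by blast
  have "x \<notin> (*) s ` (A \<inter> P)" using False by blast
  then show ?thesis unfolding e by simp
qed

lemma pc_sum:
  assumes EF: "\<And>x. E x \<subseteq> {t. s * t = x}" and Efin: "finite (E x)"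
    and eb: "\<And>x. bij_betw (e x) (E x) {..<card (E x)}"
    and "x \<in> W" and "card (E x) \<le> K"
  shows "(\<Sum>k<K. \<Sum>t\<in>{t \<in> pc s E e W k. s * t = x}. \<phi> t) = (\<Sum>t\<in>E x. \<phi> t)"
proof -
  have "(\<Sum>k<K. \<Sum>t\<in>{t \<in> pc s E e W k. s * t = x}. \<phi> t) = (\<Sum>k<K. \<Sum>t\<in>{t. t \<in> E x \<and> e x t = k}. \<phi> t)"
    using pc_fiber[OF EF, of e W _ x] \<open>x \<in> W\<close> by simp
  also have "\<dots> = (\<Sum>t\<in>E x. \<phi> t)"
  proof (rule sum.group[OF Efin])
    show "finite {..<K}" by simp
    show "e x ` E x \<subseteq> {..<K}" using eb[of x] \<open>card (E x) \<le> K\<close> by (auto simp: bij_betw_def)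
  qed
  finally show ?thesis .
qed



lemma fa_mono_simple2:
  fixes a :: "'i \<Rightarrow> real" and b :: "'j \<Rightarrow> real" and \<mu> :: "'a set \<Rightarrow> real"
  assumes fa: "fa_prob_measure \<mu>" and fin: "finite I" "finite J"
    and le: "\<And>x. (\<Sum>i\<in>I. a i * indicator (A i) x) \<le> c + ((\<Sum>j\<in>J. b j * indicator (B j) x) + d * indicator Y x)"
  shows "(\<Sum>i\<in>I. a i * \<mu> (A i)) \<le> c + ((\<Sum>j\<in>J. b j * \<mu> (B j)) + d * \<mu> Y)"
proof -
  define b' where "b' = case_sum b (\<lambda>_::unit. d)"
  define B' where "B' = case_sum B (\<lambda>_::unit. Y)"
  have fin2: "finite ({()} :: unit set)" by simp
  have e1: "(\<Sum>k\<in>J <+> {()}. b' k * indicator (B' k) x) = (\<Sum>j\<in>J. b j * indicator (B j) x) + d * indicator Y x" for x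
    by (simp add: sum.Plus[OF fin(2) fin2] o_def b'_def B'_def)
  have e2: "(\<Sum>k\<in>J <+> {()}. b' k * \<mu> (B' k)) = (\<Sum>j\<in>J. b j * \<mu> (B j)) + d * \<mu> Y"
    by (simp add: sum.Plus[OF fin(2) fin2] o_def b'_def B'_def)
  have "(\<Sum>i\<in>I. a i * \<mu> (A i)) \<le> c + (\<Sum>k\<in>J <+> {()}. b' k * \<mu> (B' k))"
    by (rule fa_mono_simple[OF fa fin(1)]) (use fin le e1 in auto)
  then show ?thesis using e2 by simp
qed

lemma le_fa_integral:
  fixes \<mu> :: "'a set \<Rightarrow> real" and a :: "'i \<Rightarrow> real"
  assumes fa: "fa_prob_measure \<mu>" and bnd: "\<And>x. g x \<le> Bd" and fin: "finite I"
    and pos: "\<And>i. i \<in> I \<Longrightarrow> 0 \<le> a i"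
    and le: "\<And>x. (\<Sum>i\<in>I. a i * indicator (A i) x) \<le> g x"
  shows "(\<Sum>i\<in>I. a i * \<mu> (A i)) \<le> fa_integral \<mu> g"
proof -
  let ?S = "{(\<Sum>i<nn. aa i * \<mu> (AA i)) | (nn::nat) (aa::nat \<Rightarrow> real) (AA::nat \<Rightarrow> 'a set).
      (\<forall>i<nn. 0 \<le> aa i) \<and> (\<forall>x. (\<Sum>i<nn. aa i * indicator (AA i) x) \<le> g x)}"
  have bdd: "bdd_above ?S"
  proof (rule bdd_aboveI)
    fix v assume "v \<in> ?S"
    then obtain n :: nat and a' A' where v: "v = (\<Sum>i<n. a' i * \<mu> (A' i))"
      and l: "\<forall>x. (\<Sum>i<n. a' i * indicator (A' i) x) \<le> g x"
      by blast
    have "(\<Sum>i<n. a' i * \<mu> (A' i)) \<le> Bd + (\<Sum>j\<in>{}. (0::real) * \<mu> (A' j))"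
      by (rule fa_mono_simple[OF fa]) (use l bnd in \<open>auto intro: order_trans\<close>)
    then show "v \<le> Bd" using v by simp
  qed
  obtain h where h: "bij_betw h {0..<card I} I" using ex_bij_betw_nat_finite[OF fin] by blast
  have e1: "(\<Sum>i\<in>I. a i * \<mu> (A i)) = (\<Sum>j<card I. (a \<circ> h) j * \<mu> ((A \<circ> h) j))"
    using sum.reindex_bij_betw[OF h, of "\<lambda>i. a i * \<mu> (A i)"] by (simp add: atLeast0LessThan)
  have e2: "(\<Sum>i\<in>I. a i * indicator (A i) x) = (\<Sum>j<card I. (a \<circ> h) j * indicator ((A \<circ> h) j) x)" for x
    using sum.reindex_bij_betw[OF h, of "\<lambda>i. a i * indicator (A i) x"] by (simp add: atLeast0LessThan)
  have p2: "\<forall>j<card I. 0 \<le> (a \<circ> h) j"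
  proof (intro allI impI)
    fix j assume "j < card I"
    then have "h j \<in> I" using h by (auto simp: bij_betw_def)
    then show "0 \<le> (a \<circ> h) j" using pos by simp
  qed
  have mem: "(\<Sum>i\<in>I. a i * \<mu> (A i)) \<in> ?S"
    unfolding e1 using p2 le e2 by (intro CollectI exI conjI refl) auto
  show ?thesis unfolding fa_integral_def by (rule cSup_upper[OF mem bdd])
qed

lemma fa_integral_le:
  fixes \<mu> :: "'a set \<Rightarrow> real"
  assumes "\<And>n a A. \<forall>i<n. 0 \<le> a i \<Longrightarrow> \<forall>x. (\<Sum>i<n. a i * indicator (A i) x) \<le> g x
      \<Longrightarrow> (\<Sum>i<(n::nat). a i * \<mu> (A i)) \<le> v"
    and "\<And>x. 0 \<le> g x"
  shows "fa_integral \<mu> g \<le> v"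
  unfolding fa_integral_def
proof (rule cSup_least)
  have "(0::real) \<in> {(\<Sum>i<n. a i * \<mu> (A i)) | (n::nat) (a::nat \<Rightarrow> real) (A::nat \<Rightarrow> 'a set).
      (\<forall>i<n. 0 \<le> a i) \<and> (\<forall>x. (\<Sum>i<n. a i * indicator (A i) x) \<le> g x)}"
    by (rule CollectI, rule exI[of _ "0::nat"], rule exI[of _ "\<lambda>_. 0"], rule exI[of _ "\<lambda>_. {}"])
       (use assms(2) in auto)
  then show "{(\<Sum>i<n. a i * \<mu> (A i)) | (n::nat) (a::nat \<Rightarrow> real) (A::nat \<Rightarrow> 'a set).
      (\<forall>i<n. 0 \<le> a i) \<and> (\<forall>x. (\<Sum>i<n. a i * indicator (A i) x) \<le> g x)} \<noteq> {}" by blast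
next
  fix w assume "w \<in> {(\<Sum>i<n. a i * \<mu> (A i)) | (n::nat) (a::nat \<Rightarrow> real) (A::nat \<Rightarrow> 'a set).
      (\<forall>i<n. 0 \<le> a i) \<and> (\<forall>x. (\<Sum>i<n. a i * indicator (A i) x) \<le> g x)}"
  then obtain n :: nat and a A where "w = (\<Sum>i<n. a i * \<mu> (A i))" "\<forall>i<n. 0 \<le> a i" "\<forall>x. (\<Sum>i<n. a i * indicator (A i) x) \<le> g x"
    unfolding mem_Collect_eq by (elim exE conjE) (rule that, assumption+)
  then show "w \<le> v" using assms(1) by simp
qed

lemma sum_le_infsum_nn:
  fixes f :: "'a \<Rightarrow> real"
  assumes "f summable_on T" "\<And>x. 0 \<le> f x" "finite F" "F \<subseteq> T"
  shows "sum f F \<le> infsum f T"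
proof -
  have "infsum f F \<le> infsum f T"
    by (rule infsum_mono_neutral) (use assms in auto)
  then show ?thesis using assms(3) by simp
qed



lemma inv_apply:
  assumes "left_fairly_invariant \<mu>" "inj_on ((*) s) B"
  shows "\<mu> ((*) s ` B) = \<mu> B"
  using assms unfolding left_fairly_invariant_def by blast

lemma dirA:
  fixes \<mu> :: "'a::semigroup_mult set \<Rightarrow> real" and s :: 'a and f :: "'a \<Rightarrow> real"
    and a :: "nat \<Rightarrow> real" and A :: "nat \<Rightarrow> 'a set"
  assumes fa: "fa_prob_measure \<mu>" and inv: "left_fairly_invariant \<mu>" and fnn: "\<And>x. 0 \<le> f x"
    and summ: "\<And>x. f summable_on {t. s * t = x}" and Mb: "\<And>x. lconv s f x \<le> M"
    and apos: "\<forall>i<n. 0 \<le> a i" and hle: "\<forall>x. (\<Sum>i<n. a i * indicator (A i) x) \<le> f x"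
  shows "(\<Sum>i<n. a i * \<mu> (A i)) \<le> fa_integral \<mu> (lconv s f)"
proof -
  define h where "h t = (\<Sum>i<n. a i * indicator (A i) t)" for t
  define \<delta> where "\<delta> = Min (insert 1 {a i | i. i<n \<and> 0 < a i})"
  have finD: "finite {a i | i. i<n \<and> 0 < a i}" by (rule finite_image_set) simp
  have dpos: "0 < \<delta>" unfolding \<delta>_def using finD by (subst Min_gr_iff) auto
  have dle: "\<delta> \<le> a i" if "i<n" "0 < a i" for i unfolding \<delta>_def using finD that by (intro Min_le) auto
  have hnn: "0 \<le> h t" for t unfolding h_def using apos by (intro sum_nonneg) auto
  have ale: "a i \<le> h t" if "i < n" "t \<in> A i" for i t
  proof -
    have "a i * indicator (A i) t \<le> h t" unfolding h_def
      by (rule member_le_sum) (use that apos in auto)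
    then show ?thesis using that by simp
  qed
  define P where "P = {t. 0 < h t}"
  have hP: "\<delta> \<le> h t" if "t \<in> P" for t
  proof -
    have "h t \<noteq> 0" using that by (auto simp: P_def)
    then obtain i where i: "i < n" "a i * indicator (A i) t \<noteq> 0" unfolding h_def
      using sum.not_neutral_contains_not_neutral by blast
    then have "t \<in> A i" "a i \<noteq> 0" by (auto simp: indicator_def split: if_splits)
    then have "0 < a i" using apos i by force
    then show ?thesis using dle[OF i(1)] ale[OF i(1) \<open>t \<in> A i\<close>] by linarith
  qed
  define E where "E x = P \<inter> {t. s*t = x}" for x
  define K where "K = nat \<lceil>M/\<delta>\<rceil>"
  have EF: "E x \<subseteq> {t. s*t = x}" for x unfolding E_def by blast
  have cardF: "real (card F) \<le> M/\<delta>" if "finite F" "F \<subseteq> E x" for F x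
  proof -
    have "\<delta> * real (card F) = (\<Sum>t\<in>F. \<delta>)" by simp
    also have "\<dots> \<le> (\<Sum>t\<in>F. h t)" by (rule sum_mono) (use that hP in \<open>auto simp: E_def\<close>)
    also have "\<dots> \<le> (\<Sum>t\<in>F. f t)" by (rule sum_mono) (use hle in \<open>auto simp: h_def\<close>)
    also have "\<dots> \<le> infsum f {t. s*t = x}"
      by (rule sum_le_infsum_nn[OF summ fnn that(1)]) (use that EF in blast)
    also have "\<dots> \<le> M" using Mb[of x] by (simp add: lconv_def)
    finally show ?thesis using dpos by (simp add: field_simps)
  qed
  have KM: "M/\<delta> \<le> real K" unfolding K_def by (rule real_nat_ceiling_ge)
  have Efin: "finite (E x)" for x
  proof (rule ccontr)
    assume "infinite (E x)"
    then obtain F where F: "finite F" "F \<subseteq> E x" "card F = K + 1"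
      using infinite_arbitrarily_large by blast
    then show False using cardF[OF F(1,2)] KM by simp
  qed
  have EK: "card (E x) \<le> K" for x using cardF[OF Efin order_refl, of x] KM by linarith
  define e where "e x = (SOME g. bij_betw g (E x) {..<card (E x)})" for x
  have eb: "bij_betw (e x) (E x) {..<card (E x)}" for x
  proof -
    have "\<exists>g. bij_betw g (E x) {..<card (E x)}"
      using ex_bij_betw_finite_nat[OF Efin[of x]] by (simp add: atLeast0LessThan)
    then show ?thesis unfolding e_def by (rule someI_ex)
  qed
  have einj: "inj_on (e x) (E x)" for x using eb bij_betw_imp_inj_on by blast
  define Pk where "Pk k = pc s E e UNIV k" for k
  have inj: "inj_on ((*) s) (Pk k)" for k unfolding Pk_def by (rule pc_inj[OF einj])
  define I2 where "I2 = {..<K} \<times> {..<n}"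
  have finI2: "finite I2" unfolding I2_def by simp
  have pt: "(\<Sum>p\<in>I2. a (snd p) * indicator ((*) s ` (A (snd p) \<inter> Pk (fst p))) x) \<le> lconv s f x" for x
  proof -
    have "(\<Sum>p\<in>I2. a (snd p) * indicator ((*) s ` (A (snd p) \<inter> Pk (fst p))) x)
        = (\<Sum>k<K. \<Sum>i<n. a i * indicator ((*) s ` (A i \<inter> Pk k)) x)"
      unfolding I2_def by (simp only: sum.cartesian_product split_def)
    also have "\<dots> = (\<Sum>k<K. \<Sum>i<n. a i * (\<Sum>t\<in>{t\<in>Pk k. s*t=x}. indicator (A i) t))"
      by (simp only: ind_inj_piece[OF inj])
    also have "\<dots> = (\<Sum>k<K. \<Sum>t\<in>{t\<in>Pk k. s*t=x}. h t)"
      unfolding h_def by (simp only: sum_distrib_left sum.swap[of _ "{..<n}"])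
    also have "\<dots> = (\<Sum>t\<in>E x. h t)"
      unfolding Pk_def by (rule pc_sum[OF EF Efin eb]) (auto simp: EK)
    also have "\<dots> \<le> (\<Sum>t\<in>E x. f t)" by (rule sum_mono) (use hle in \<open>auto simp: h_def\<close>)
    also have "\<dots> \<le> infsum f {t. s*t = x}"
      by (rule sum_le_infsum_nn[OF summ fnn Efin EF])
    finally show ?thesis by (simp add: lconv_def)
  qed
  have Pcov: "P \<subseteq> (\<Union>k\<in>{..<K}. Pk k)"
  proof
    fix t assume "t \<in> P"
    then have tE: "t \<in> E (s*t)" by (auto simp: E_def)
    then have "e (s*t) t < card (E (s*t))" using eb[of "s*t"] by (auto simp: bij_betw_def)
    then have "e (s*t) t < K" using EK[of "s*t"] by linarith
    moreover have "t \<in> Pk (e (s*t) t)" using tE by (simp add: Pk_def pc_def)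
    ultimately show "t \<in> (\<Union>k\<in>{..<K}. Pk k)" by blast
  qed
  have peri: "a i * (\<Sum>k<K. \<mu> (A i \<inter> Pk k)) = a i * \<mu> (A i)" if "i < n" for i
  proof (cases "a i = 0")
    case True then show ?thesis by simp
  next
    case False
    then have ai: "0 < a i" using apos that by force
    have AP: "A i \<subseteq> P" using ale[OF that] ai by (auto simp: P_def intro: less_le_trans)
    have "(\<Sum>k<K. \<mu> (A i \<inter> Pk k)) = \<mu> (\<Union>k\<in>{..<K}. A i \<inter> Pk k)"
    proof (rule fa_union_finite[OF fa, symmetric])
      show "finite {..<K}" by simp
      show "disjoint_family_on (\<lambda>k. A i \<inter> Pk k) {..<K}"
        using pc_disj_family[of s E e UNIV "{..<K}"] unfolding Pk_def disjoint_family_on_def by blast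
    qed
    also have "(\<Union>k\<in>{..<K}. A i \<inter> Pk k) = A i" using AP Pcov by blast
    finally show ?thesis by simp
  qed
  have formal: "(\<Sum>p\<in>I2. a (snd p) * \<mu> ((*) s ` (A (snd p) \<inter> Pk (fst p)))) = (\<Sum>i<n. a i * \<mu> (A i))"
  proof -
    have "(\<Sum>p\<in>I2. a (snd p) * \<mu> ((*) s ` (A (snd p) \<inter> Pk (fst p))))
        = (\<Sum>k<K. \<Sum>i<n. a i * \<mu> ((*) s ` (A i \<inter> Pk k)))"
      unfolding I2_def by (simp only: sum.cartesian_product split_def)
    also have "\<dots> = (\<Sum>k<K. \<Sum>i<n. a i * \<mu> (A i \<inter> Pk k))"
      by (intro sum.cong refl arg_cong2[where f="(*)"] inv_apply[OF inv] inj_on_subset[OF inj]) auto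
    also have "\<dots> = (\<Sum>i<n. a i * (\<Sum>k<K. \<mu> (A i \<inter> Pk k)))"
      by (simp only: sum_distrib_left sum.swap[of _ "{..<K}"])
    also have "\<dots> = (\<Sum>i<n. a i * \<mu> (A i))"
      by (rule sum.cong[OF refl]) (simp add: peri)
    finally show ?thesis .
  qed
  have "(\<Sum>p\<in>I2. a (snd p) * \<mu> ((*) s ` (A (snd p) \<inter> Pk (fst p)))) \<le> fa_integral \<mu> (lconv s f)"
    by (rule le_fa_integral[OF fa Mb finI2]) (use apos pt in \<open>auto simp: I2_def\<close>)
  then show ?thesis using formal by simp
qed



lemma dirB:
  fixes \<mu> :: "'a::semigroup_mult set \<Rightarrow> real" and s :: 'a and f :: "'a \<Rightarrow> real"
    and b :: "nat \<Rightarrow> real" and B :: "nat \<Rightarrow> 'a set"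
  assumes fa: "fa_prob_measure \<mu>" and inv: "left_fairly_invariant \<mu>" and fnn: "\<And>x. 0 \<le> f x"
    and summ: "\<And>x. f summable_on {t. s * t = x}" and Mb: "\<And>x. lconv s f x \<le> M"
    and fb: "\<And>x. f x \<le> Bf"
    and bpos: "\<forall>j<m. 0 \<le> b j" and gle: "\<forall>x. (\<Sum>j<m. b j * indicator (B j) x) \<le> lconv s f x"
    and epos: "0 < \<epsilon>"
  shows "(\<Sum>j<m. b j * \<mu> (B j)) \<le> fa_integral \<mu> f + 3 * \<epsilon>"
proof -
  have lnn: "0 \<le> lconv s f x" for x unfolding lconv_def by (rule infsum_nonneg) (use fnn in auto)
  have M0: "0 \<le> M" using lnn Mb order_trans by blast
  have Bf0: "0 \<le> Bf" using fnn fb order_trans by blast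
  define N where "N = nat \<lceil>M/\<epsilon>\<rceil> + 1"
  have Npos: "0 < N" by (simp add: N_def)
  have MN: "M / \<epsilon> \<le> real N" unfolding N_def using real_nat_ceiling_ge[of "M/\<epsilon>"] by simp
  have MNe: "M \<le> \<epsilon> * real N" using MN epos by (simp add: field_simps)
  define \<delta> where "\<delta> = \<epsilon> / real N"
  have dpos: "0 < \<delta>" using epos Npos by (simp add: \<delta>_def)
  have Nd: "real N * \<delta> = \<epsilon>" using Npos by (simp add: \<delta>_def)
  have exE: "\<exists>F. finite F \<and> F \<subseteq> {t. s*t=x} \<and> lconv s f x - \<epsilon> \<le> sum f F" for x
  proof -
    obtain F where F: "finite F" "F \<subseteq> {t. s*t=x}" "dist (sum f F) (infsum f {t. s*t=x}) \<le> \<epsilon>"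
      using infsum_finite_approximation[OF summ epos] by blast
    then show ?thesis by (intro exI[of _ F]) (auto simp: lconv_def dist_real_def)
  qed
  define E where "E x = (SOME F. finite F \<and> F \<subseteq> {t. s*t=x} \<and> lconv s f x - \<epsilon> \<le> sum f F)" for x
  have Eprop: "finite (E x) \<and> E x \<subseteq> {t. s*t=x} \<and> lconv s f x - \<epsilon> \<le> sum f (E x)" for x
    unfolding E_def by (rule someI_ex[OF exE])
  have Efin: "finite (E x)" and EF: "E x \<subseteq> {t. s*t=x}" and Eapp: "lconv s f x - \<epsilon> \<le> sum f (E x)" for x
    using Eprop by blast+
  define e where "e x = (SOME g. bij_betw g (E x) {..<card (E x)})" for x
  have eb: "bij_betw (e x) (E x) {..<card (E x)}" for x
  proof -
    have "\<exists>g. bij_betw g (E x) {..<card (E x)}"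
      using ex_bij_betw_finite_nat[OF Efin[of x]] by (simp add: atLeast0LessThan)
    then show ?thesis unfolding e_def by (rule someI_ex)
  qed
  have einj: "inj_on (e x) (E x)" for x using eb bij_betw_imp_inj_on by blast
  define Y where "Y = {x. N \<le> card (E x)}"
  have muY: "real N * \<mu> Y \<le> 1"
  proof -
    define Q where "Q k = pc s E e Y k" for k
    have QY: "\<mu> (Q k) = \<mu> Y" if "k < N" for k
    proof -
      have "(*) s ` Q k = Y" unfolding Q_def using pc_image[OF EF eb, of Y k] that
        by (auto simp: Y_def)
      then have "\<mu> Y = \<mu> ((*) s ` Q k)" by simp
      also have "\<dots> = \<mu> (Q k)" unfolding Q_def by (rule inv_apply[OF inv pc_inj[OF einj]])
      finally show ?thesis by simp
    qed
    have "(\<Sum>k<N. \<mu> (Q k)) = \<mu> (\<Union>k\<in>{..<N}. Q k)"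
      by (rule fa_union_finite[OF fa, symmetric]) (simp_all add: Q_def pc_disj_family)
    also have "\<dots> \<le> 1" by (rule fa_le1[OF fa])
    finally have "(\<Sum>k<N. \<mu> (Q k)) \<le> 1" .
    moreover have "(\<Sum>k<N. \<mu> (Q k)) = real N * \<mu> Y" using QY by simp
    ultimately show ?thesis by simp
  qed
  define R where "R k = pc s E e (- Y) k" for k
  have injR: "inj_on ((*) s) (R k)" for k unfolding R_def by (rule pc_inj[OF einj])
  define L where "L = nat \<lceil>Bf/\<delta>\<rceil>"
  define C where "C j = {t. real (Suc j) * \<delta> \<le> f t}" for j
  define fd where "fd t = (\<Sum>j<L. \<delta> * indicator (C j) t)" for t
  have fd_bounds: "fd t \<le> f t \<and> f t - \<delta> \<le> fd t" for t
  proof -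
    define y where "y = f t / \<delta>"
    have y0: "0 \<le> y" using fnn dpos by (simp add: y_def)
    define q where "q = nat \<lfloor>y\<rfloor>"
    have qy: "real q \<le> y" "y < real q + 1" using y0 unfolding q_def
      by (simp_all add: floor_le_iff)
    have qL: "q \<le> L"
    proof -
      have "y \<le> Bf/\<delta>" using fb[of t] dpos by (simp add: y_def divide_right_mono)
      then have "\<lfloor>y\<rfloor> \<le> \<lceil>Bf/\<delta>\<rceil>" by (meson floor_le_ceiling floor_mono order_trans)
      then show ?thesis unfolding q_def L_def by simp
    qed
    have memC: "t \<in> C j \<longleftrightarrow> j < q" for j
    proof -
      have "t \<in> C j \<longleftrightarrow> real (Suc j) \<le> y" using dpos by (simp add: C_def y_def field_simps)
      also have "\<dots> \<longleftrightarrow> j < q" using qy by (auto simp: q_def le_floor_iff) linarith+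
      finally show ?thesis .
    qed
    have "fd t = (\<Sum>j<L. if j < q then \<delta> else 0)" unfolding fd_def
      by (rule sum.cong) (auto simp: memC indicator_def)
    also have "\<dots> = (\<Sum>j\<in>{j\<in>{..<L}. j < q}. \<delta>)" by (rule sum.inter_filter[symmetric]) simp
    also have "{j\<in>{..<L}. j < q} = {..<q}" using qL by auto
    finally have "fd t = real q * \<delta>" by simp
    moreover have "real q * \<delta> \<le> f t" "f t - \<delta> \<le> real q * \<delta>"
      using qy dpos by (simp_all add: y_def field_simps)
    ultimately show ?thesis by simp
  qed
  have fd0: "0 \<le> fd t" for t unfolding fd_def using dpos by (intro sum_nonneg) auto
  define J where "J = {..<L} \<times> {..<N}"
  have finJ: "finite J" by (simp add: J_def)
  have h'le: "(\<Sum>p\<in>J. \<delta> * indicator (C (fst p) \<inter> R (snd p)) t) \<le> f t" for t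
  proof -
    have "(\<Sum>p\<in>J. \<delta> * indicator (C (fst p) \<inter> R (snd p)) t)
        = (\<Sum>j<L. \<Sum>k<N. \<delta> * indicator (C j \<inter> R k) t)"
      unfolding J_def by (simp only: sum.cartesian_product split_def)
    also have "\<dots> = (\<Sum>k<N. indicator (R k) t * fd t)"
      unfolding fd_def by (simp only: sum.swap[of _ "{..<L}"] sum_distrib_left indicator_inter_arith mult.assoc mult.commute mult.left_commute)
    also have "\<dots> = (\<Sum>k<N. indicator (R k) t) * fd t" by (simp add: sum_distrib_right)
    also have "\<dots> \<le> 1 * fd t"
    proof (rule mult_right_mono[OF _ fd0])
      have "(\<Sum>k<N. indicator (R k) t) \<le> (\<Sum>k<N. if k = e (s*t) t then 1 else 0 :: real)"
        by (rule sum_mono) (auto simp: R_def pc_def indicator_def)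
      also have "\<dots> \<le> 1" by simp
      finally show "(\<Sum>k<N. indicator (R k) t) \<le> (1::real)" .
    qed
    also have "\<dots> \<le> f t" using fd_bounds by simp
    finally show ?thesis .
  qed
  have ptB: "(\<Sum>j<m. b j * indicator (B j) x)
      \<le> 2 * \<epsilon> + ((\<Sum>p\<in>J. \<delta> * indicator ((*) s ` (C (fst p) \<inter> R (snd p))) x) + M * indicator Y x)" for x
  proof -
    have hh0: "0 \<le> (\<Sum>p\<in>J. \<delta> * indicator ((*) s ` (C (fst p) \<inter> R (snd p))) x)"
      using dpos by (intro sum_nonneg) auto
    show ?thesis
    proof (cases "x \<in> Y")
      case True
      have g1: "(\<Sum>j<m. b j * indicator (B j) x) \<le> M" using gle Mb[of x] by (meson order_trans)
      have "M * indicator Y x = M" using True by simp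
      then show ?thesis using g1 hh0 epos by linarith
    next
      case False
      then have cE: "card (E x) \<le> N" by (simp add: Y_def)
      have "(\<Sum>p\<in>J. \<delta> * indicator ((*) s ` (C (fst p) \<inter> R (snd p))) x)
          = (\<Sum>j<L. \<Sum>k<N. \<delta> * indicator ((*) s ` (C j \<inter> R k)) x)"
        unfolding J_def by (simp only: sum.cartesian_product split_def)
      also have "\<dots> = (\<Sum>k<N. \<Sum>j<L. \<delta> * indicator ((*) s ` (C j \<inter> R k)) x)"
        by (rule sum.swap)
      also have "\<dots> = (\<Sum>k<N. \<Sum>j<L. \<delta> * (\<Sum>t\<in>{t\<in>R k. s*t=x}. indicator (C j) t))"
        by (simp only: ind_inj_piece[OF injR])
      also have "\<dots> = (\<Sum>k<N. \<Sum>t\<in>{t\<in>R k. s*t=x}. fd t)"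
        unfolding fd_def by (simp only: sum_distrib_left sum.swap[of _ "{..<L}"])
      also have "\<dots> = (\<Sum>t\<in>E x. fd t)"
        unfolding R_def by (rule pc_sum[OF EF Efin eb]) (use False cE in auto)
      finally have eq: "(\<Sum>p\<in>J. \<delta> * indicator ((*) s ` (C (fst p) \<inter> R (snd p))) x) = (\<Sum>t\<in>E x. fd t)" .
      have "(\<Sum>t\<in>E x. f t - \<delta>) \<le> (\<Sum>t\<in>E x. fd t)" by (rule sum_mono) (use fd_bounds in blast)
      moreover have "(\<Sum>t\<in>E x. f t - \<delta>) = sum f (E x) - real (card (E x)) * \<delta>"
        by (simp add: sum_subtractf)
      moreover have "real (card (E x)) * \<delta> \<le> real N * \<delta>" using cE dpos by simp
      ultimately have "lconv s f x - 2 * \<epsilon> \<le> (\<Sum>t\<in>E x. fd t)" using Eapp[of x] Nd by linarith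
      moreover have "M * indicator Y x = 0" using False by simp
      moreover have "(\<Sum>j<m. b j * indicator (B j) x) \<le> lconv s f x" using gle by blast
      ultimately show ?thesis using eq by linarith
    qed
  qed
  have "(\<Sum>j<m. b j * \<mu> (B j))
      \<le> 2 * \<epsilon> + ((\<Sum>p\<in>J. \<delta> * \<mu> ((*) s ` (C (fst p) \<inter> R (snd p)))) + M * \<mu> Y)"
    by (rule fa_mono_simple2[OF fa _ finJ ptB]) simp
  also have "(\<Sum>p\<in>J. \<delta> * \<mu> ((*) s ` (C (fst p) \<inter> R (snd p)))) = (\<Sum>p\<in>J. \<delta> * \<mu> (C (fst p) \<inter> R (snd p)))"
    by (intro sum.cong refl arg_cong2[where f="(*)"] inv_apply[OF inv] inj_on_subset[OF injR]) auto
  also have "\<dots> \<le> fa_integral \<mu> f"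
    by (rule le_fa_integral[OF fa fb finJ]) (use dpos h'le in auto)
  also have "M * \<mu> Y \<le> \<epsilon>"
  proof -
    have "real N * (M * \<mu> Y) = M * (real N * \<mu> Y)" by simp
    also have "\<dots> \<le> M * 1" using muY M0 by (intro mult_left_mono) auto
    also have "\<dots> \<le> real N * \<epsilon>" using MNe by (simp add: mult.commute)
    finally show ?thesis using Npos by simp
  qed
  finally show ?thesis by simp
qed



theorem mainTheorem2:
  fixes \<mu> :: "'a::semigroup_mult set \<Rightarrow> real" and s :: 'a and f :: "'a \<Rightarrow> real"
  assumes "left_fairly_amenable TYPE('a)"
    and "fa_prob_measure \<mu>" and "left_fairly_invariant \<mu>"
    and "\<forall>x. 0 \<le> f x" and "bdd_above (range f)"
    and "\<forall>x. f summable_on {t. s * t = x}"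
    and "bdd_above (range (lconv s f))"
  shows "fa_integral \<mu> (lconv s f) = fa_integral \<mu> f"
proof -
  have fa: "fa_prob_measure \<mu>" and inv: "left_fairly_invariant \<mu>" using assms by auto
  have fnn: "\<And>x. 0 \<le> f x" and summ: "\<And>x. f summable_on {t. s * t = x}" using assms by auto
  obtain M where Mb: "\<And>x. lconv s f x \<le> M" using assms(7) by (auto simp: bdd_above_def)
  obtain Bf where fb: "\<And>x. f x \<le> Bf" using assms(5) by (auto simp: bdd_above_def)
  have lnn: "0 \<le> lconv s f x" for x unfolding lconv_def by (rule infsum_nonneg) (use fnn in auto)
  have le1: "fa_integral \<mu> f \<le> fa_integral \<mu> (lconv s f)"
    by (rule fa_integral_le[OF _ fnn]) (rule dirA[OF fa inv fnn summ Mb], assumption+)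
  have le2: "fa_integral \<mu> (lconv s f) \<le> fa_integral \<mu> f"
  proof (rule fa_integral_le[OF _ lnn])
    fix n :: nat and b :: "nat \<Rightarrow> real" and B :: "nat \<Rightarrow> 'a set"
    assume bpos: "\<forall>i<n. 0 \<le> b i" and gle: "\<forall>x. (\<Sum>i<n. b i * indicator (B i) x) \<le> lconv s f x"
    show "(\<Sum>i<n. b i * \<mu> (B i)) \<le> fa_integral \<mu> f"
    proof (rule field_le_epsilon)
      fix e :: real assume "0 < e"
      then have "0 < e / 3" by simp
      from dirB[OF fa inv fnn summ Mb fb bpos gle this] show "(\<Sum>i<n. b i * \<mu> (B i)) \<le> fa_integral \<mu> f + e"
        by simp
    qed
  qed
  from le1 le2 show ?thesis by simp
qed


end
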